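(* For all $a,b\in\mathbb{R}$, the matrix $$M_{10}^{(2)}(a,b)=\begin{bmatrix} 1 & 1 & 1 & 1 & 1 & 1 & 1 & 1 & 1 & 1 \\ 1 & \mathrm{i} & \mathrm{i} e^{\mathrm{i} b} & e^{\mathrm{i} b} & -\mathrm{i} & -e^{\mathrm{i} b} & e^{\mathrm{i} b} & -\mathrm{i} e^{\mathrm{i} b} & -e^{\mathrm{i} b} & -1 \\ 1 & -1 & -\mathrm{i} e^{\mathrm{i} b} & -e^{\mathrm{i} a} & e^{\mathrm{i} a} & \mathrm{i} e^{\mathrm{i} b} & -\mathrm{i} e^{\mathrm{i} a} & e^{\mathrm{i} a} & -e^{\mathrm{i} a} & \mathrm{i} e^{\mathrm{i} a} \\ 1 & \mathrm{i} & -\mathrm{i} & -\mathrm{i} e^{\mathrm{i} a} & \mathrm{i} & -\mathrm{i} & \mathrm{i} e^{\mathrm{i} a} & -1 & -1 & 1 \\ 1 & 1 & \mathrm{i} & -1 & \mathrm{i} & \mathrm{i} & -1 & -\mathrm{i} & -\mathrm{i} & -\mathrm{i} \\ 1 & -\mathrm{i} & -1 & e^{\mathrm{i} a} & 1 & -1 & -e^{\mathrm{i} a} & -1 & 1 & \mathrm{i} \\ 1 & \mathrm{i} & e^{\mathrm{i} b} & -e^{\mathrm{i} b} & -\mathrm{i} & -\mathrm{i} e^{\mathrm{i} b} & -e^{\mathrm{i} b} & \mathrm{i} e^{\mathrm{i} b} & e^{\mathrm{i} b} & -1 \\ 1 & -1 & -\mathrm{i} e^{\mathrm{i} b} & \mathrm{i}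 e^{\mathrm{i} a} & -e^{\mathrm{i} a} & \mathrm{i} e^{\mathrm{i} b} & e^{\mathrm{i} a} & -e^{\mathrm{i} a} & e^{\mathrm{i} a} & -\mathrm{i} e^{\mathrm{i} a} \\ 1 & -\mathrm{i} & \mathrm{i} e^{\mathrm{i} b} & \mathrm{i} e^{\mathrm{i} a} & -1 & -\mathrm{i} e^{\mathrm{i} b} & -\mathrm{i} e^{\mathrm{i} a} & \mathrm{i} & -1 & 1 \\ 1 & -\mathrm{i} & -e^{\mathrm{i} b} & -\mathrm{i} e^{\mathrm{i} a} & -1 & e^{\mathrm{i} b} & \mathrm{i} e^{\mathrm{i} a} & 1 & \mathrm{i} & -1 \end{bmatrix}$$ is a dephased complex Hadamard matrix, i.e. $M_{10}^{(2)}(a,b)\,M_{10}^{(2)}(a,b)^*=10\,I_{10}$.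
   Context: $^*$ denotes conjugate transpose; a dephased complex Hadamard matrix of order $d$ is a $d\times d$ matrix with unimodular entries, first row and first column all equal to $1$, and $HH^*=dI_d$. *)

theory Defs
  imports Complex_Main
begin

text \<open>A d x d complex matrix is represented as a function H :: nat => nat => complex,
  where H i j is the entry in row i, column j (0-based, i, j < d).\<close>

definition dephased_complex_hadamard :: "nat \<Rightarrow> (nat \<Rightarrow> nat \<Rightarrow> complex) \<Rightarrow> bool" where
  "dephased_complex_hadamard d H \<longleftrightarrow>
     (\<forall>i<d. \<forall>j<d. cmod (H i j) = 1) \<and>
     (\<forall>j<d. H 0 j = 1) \<and>
     (\<forall>i<d. H i 0 = 1) \<and>
     (\<forall>i<d. \<forall>k<d. (\<Sum>j<d. H i j * cnj (H k j)) = (if i = k then of_nat d else 0))"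

definition M10_2_rows :: "real \<Rightarrow> real \<Rightarrow> complex list list" where
  "M10_2_rows a b = (let i = \<i>; A = exp (\<i> * of_real a); B = exp (\<i> * of_real b) in
   [[1, 1, 1, 1, 1, 1, 1, 1, 1, 1],
    [1, i, i*B, B, -i, -B, B, -i*B, -B, -1],
    [1, -1, -i*B, -A, A, i*B, -i*A, A, -A, i*A],
    [1, i, -i, -i*A, i, -i, i*A, -1, -1, 1],
    [1, 1, i, -1, i, i, -1, -i, -i, -i],
    [1, -i, -1, A, 1, -1, -A, -1, 1, i],
    [1, i, B, -B, -i, -i*B, -B, i*B, B, -1],
    [1, -1, -i*B, i*A, -A, i*B, A, -A, A, -i*A],
    [1, -i, i*B, i*A, -1, -i*B, -i*A, i, -1, 1],
    [1, -i, -B, -i*A, -1, B, i*A, 1, i, -1]])"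

definition M10_2 :: "real \<Rightarrow> real \<Rightarrow> nat \<Rightarrow> nat \<Rightarrow> complex" where
  "M10_2 a b r c = M10_2_rows a b ! r ! c"

end

theory Submission
  imports Defs
begin

lemma ten_cases: "(i::nat) < 10 \<Longrightarrow> i = 0 \<or> i = 1 \<or> i = 2 \<or> i = 3 \<or> i = 4 \<or> i = 5 \<or> i = 6 \<or> i = 7 \<or> i = 8 \<or> i = 9"
  by arith
lemma all10: "(\<forall>i<10::nat. P i) \<longleftrightarrow> P 0 \<and> P 1 \<and> P 2 \<and> P 3 \<and> P 4 \<and> P 5 \<and> P 6 \<and> P 7 \<and> P 8 \<and> P 9"
  apply (rule iffI)
   apply simp
  apply (intro allI impI)
  apply (drule ten_cases)
  apply (elim disjE)
  apply simp_all
  done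
lemma sum10: "(\<Sum>j<10::nat. f j) = f 0 + f 1 + f 2 + f 3 + f 4 + f 5 + f 6 + f 7 + f 8 + (f 9 :: complex)"
  by (simp add: numeral_eq_Suc lessThan_Suc add.assoc)
definition MM :: "complex \<Rightarrow> complex \<Rightarrow> complex list list" where "MM A B = [[1, 1, 1, 1, 1, 1, 1, 1, 1, 1],
    [1, \<i>, \<i>*B, B, -\<i>, -B, B, -\<i>*B, -B, -1],
    [1, -1, -\<i>*B, -A, A, \<i>*B, -\<i>*A, A, -A, \<i>*A],
    [1, \<i>, -\<i>, -\<i>*A, \<i>, -\<i>, \<i>*A, -1, -1, 1],
    [1, 1, \<i>, -1, \<i>, \<i>, -1, -\<i>, -\<i>, -\<i>],
    [1, -\<i>, -1, A, 1, -1, -A, -1, 1, \<i>],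
    [1, \<i>, B, -B, -\<i>, -\<i>*B, -B, \<i>*B, B, -1],
    [1, -1, -\<i>*B, \<i>*A, -A, \<i>*B, A, -A, A, -\<i>*A],
    [1, -\<i>, \<i>*B, \<i>*A, -1, -\<i>*B, -\<i>*A, \<i>, -1, 1],
    [1, -\<i>, -B, -\<i>*A, -1, B, \<i>*A, 1, \<i>, -1]]"
lemma orth: assumes hA: "A * cnj A = 1" and hB: "B * cnj B = 1"
  shows "\<forall>i<10. \<forall>k<10. (\<Sum>j<10::nat. MM A B ! i ! j * cnj (MM A B ! k ! j)) = (if i = k then of_nat 10 else 0)"
    unfolding all10 sum10 apply (simp add: MM_def algebra_simps hA hB)
  using hA hB by algebra

theorem mainTheorem4:
  fixes a b :: real
  shows "dephased_complex_hadamard 10 (M10_2 a b)"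
proof -
  define A where "A = exp (\<i> * of_real a)"
  define B where "B = exp (\<i> * of_real b)"
  have nA: "cmod A = 1" unfolding A_def by simp
  have nB: "cmod B = 1" unfolding B_def by simp
  have hA: "A * cnj A = 1" using nA complex_norm_square[of A] by simp
  have hB: "B * cnj B = 1" using nB complex_norm_square[of B] by simp
  have M0: "M10_2_rows a b = MM A B"
    unfolding M10_2_rows_def MM_def A_def B_def Let_def by (rule refl)
  have M: "M10_2 a b = (\<lambda>r c. MM A B ! r ! c)"
    unfolding M10_2_def M0 by (rule refl)
  have c1: "\<forall>i<10. \<forall>j<10::nat. cmod (MM A B ! i ! j) = 1"
    unfolding all10 by (simp add: MM_def nA nB norm_mult)
  have c2: "\<forall>j<10::nat. MM A B ! 0 ! j = 1" "\<forall>j<10::nat. MM A B ! j ! 0 = 1"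
    unfolding all10 by (simp_all add: MM_def)
  show ?thesis
    unfolding dephased_complex_hadamard_def M
    using c1 c2 orth[OF hA hB] by (intro conjI) assumption+
qed

end
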